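(* There is no cubic graph $G$ with a proper $5$-edge-coloring $c$ such that $|N_G(c)|=1$.
   Context: Graphs are finite, undirected, loopless, and may contain parallel edges. A proper $5$-edge-coloring of $G$ is a map $c:E(G)\to\{1,\dots,5\}$ with adjacent edges receiving different colors. For such $c$ and a vertex $v$, $S_c(v)$ is the set of colors on edges incident to $v$. An edge $uv$ of a cubic graph is poor if $|S_c(u)\cup S_c(v)|=3$, rich if $|S_c(u)\cup S_c(v)|=5$, and abnormal if it is neither poor nor rich. $N_G(c)$ denotes the set of abnormal edges of $G$ with respect to $c$. *)

theory Defs
  imports Main
begin

text \<open>A finite undirected loopless multigraph: vertex set V, edge set E (edges are
abstract objects, so parallel edges are allowed), and an endpoint map ends giving each
edge a set of exactly two distinct vertices of V.\<close>

definition multigraph :: "'v set \<Rightarrow> 'e set \<Rightarrow> ('e \<Rightarrow> 'v set) \<Rightarrow> bool" where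
  "multigraph V E ends \<longleftrightarrow> finite V \<and> finite E \<and>
     (\<forall>e\<in>E. ends e \<subseteq> V \<and> card (ends e) = 2)"

definition incident :: "'e set \<Rightarrow> ('e \<Rightarrow> 'v set) \<Rightarrow> 'v \<Rightarrow> 'e set" where
  "incident E ends v = {e\<in>E. v \<in> ends e}"

definition cubic :: "'v set \<Rightarrow> 'e set \<Rightarrow> ('e \<Rightarrow> 'v set) \<Rightarrow> bool" where
  "cubic V E ends \<longleftrightarrow> multigraph V E ends \<and> (\<forall>v\<in>V. card (incident E ends v) = 3)"

definition proper_5_edge_coloring :: "'e set \<Rightarrow> ('e \<Rightarrow> 'v set) \<Rightarrow> ('e \<Rightarrow> nat) \<Rightarrow> bool" where
  "proper_5_edge_coloring E ends c \<longleftrightarrow>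
     (\<forall>e\<in>E. c e \<in> {1..5}) \<and>
     (\<forall>e\<in>E. \<forall>f\<in>E. e \<noteq> f \<and> ends e \<inter> ends f \<noteq> {} \<longrightarrow> c e \<noteq> c f)"

definition Sc :: "'e set \<Rightarrow> ('e \<Rightarrow> 'v set) \<Rightarrow> ('e \<Rightarrow> nat) \<Rightarrow> 'v \<Rightarrow> nat set" where
  "Sc E ends c v = c ` incident E ends v"

definition edge_colors :: "'e set \<Rightarrow> ('e \<Rightarrow> 'v set) \<Rightarrow> ('e \<Rightarrow> nat) \<Rightarrow> 'e \<Rightarrow> nat set" where
  "edge_colors E ends c e = (\<Union>v\<in>ends e. Sc E ends c v)"

definition poor_edge where
  "poor_edge E ends c e \<longleftrightarrow> card (edge_colors E ends c e) = 3"

definition rich_edge where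
  "rich_edge E ends c e \<longleftrightarrow> card (edge_colors E ends c e) = 5"

definition abnormal_edges :: "'e set \<Rightarrow> ('e \<Rightarrow> 'v set) \<Rightarrow> ('e \<Rightarrow> nat) \<Rightarrow> 'e set" where
  "abnormal_edges E ends c = {e\<in>E. \<not> poor_edge E ends c e \<and> \<not> rich_edge E ends c e}"

end

theory Submission
  imports Defs
begin

locale G5 =
  fixes V :: "'v set" and E :: "'e set" and ends :: "'e \<Rightarrow> 'v set" and c :: "'e \<Rightarrow> nat"
  assumes cub: "cubic V E ends" and col: "proper_5_edge_coloring E ends c"
begin

definition "M v = {1..5} - Sc E ends c v"
definition "n R = card {v\<in>V. M v = R}"

lemma finV: "finite V" and finE: "finite E"
  using cub unfolding cubic_def multigraph_def by auto

lemma ends2: "e\<in>E \<Longrightarrow> ends e \<subseteq> V \<and> card (ends e) = 2"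
  using cub unfolding cubic_def multigraph_def by auto

lemma colr: "e\<in>E \<Longrightarrow> c e \<in> {1..5}"
  using col unfolding proper_5_edge_coloring_def by auto

lemma uniq: "e\<in>E \<Longrightarrow> f\<in>E \<Longrightarrow> v\<in>ends e \<Longrightarrow> v\<in>ends f \<Longrightarrow> c e = c f \<Longrightarrow> e = f"
  using col unfolding proper_5_edge_coloring_def by blast

lemma Sc_sub: "Sc E ends c v \<subseteq> {1..5}"
  unfolding Sc_def incident_def using colr by auto

lemma Sc_card: "v\<in>V \<Longrightarrow> card (Sc E ends c v) = 3"
proof -
  assume v: "v\<in>V"
  have "inj_on c (incident E ends v)"
    by (rule inj_onI) (auto simp: incident_def intro: uniq)
  moreover have "card (incident E ends v) = 3" using cub v unfolding cubic_def by auto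
  ultimately show ?thesis unfolding Sc_def by (simp add: card_image)
qed

lemma M_sub: "M v \<subseteq> {1..5}" unfolding M_def by auto

lemma M_card: "v\<in>V \<Longrightarrow> card (M v) = 2"
  unfolding M_def using Sc_card[of v] Sc_sub[of v]
  by (simp add: card_Diff_subset finite_subset)

lemma Sc_M: "Sc E ends c v = {1..5} - M v"
  unfolding M_def using Sc_sub[of v] by auto

lemma col_in: "e\<in>E \<Longrightarrow> v\<in>ends e \<Longrightarrow> c e \<in> Sc E ends c v"
  unfolding Sc_def incident_def by auto

lemma col_notM: "e\<in>E \<Longrightarrow> v\<in>ends e \<Longrightarrow> c e \<notin> M v"
  using col_in unfolding M_def by auto

lemma ex_edge: "v\<in>V \<Longrightarrow> k\<in>{1..5} \<Longrightarrow> k\<notin>M v \<Longrightarrow> \<exists>e\<in>E. v\<in>ends e \<and> c e = k"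
  unfolding M_def Sc_def incident_def by auto

lemma ends_eq: "e\<in>E \<Longrightarrow> \<exists>u w. u\<noteq>w \<and> ends e = {u,w}"
  using ends2 by (meson card_2_iff)

lemma ec: "ends e = {u,w} \<Longrightarrow> edge_colors E ends c e = Sc E ends c u \<union> Sc E ends c w"
  unfolding edge_colors_def by auto

lemma normal_edge:
  assumes e: "e\<in>E" "e \<notin> abnormal_edges E ends c" "ends e = {u,w}" "u\<noteq>w"
  shows "M w = M u \<or> M w = ({1..5} - {c e}) - M u"
proof -
  have uw: "u\<in>V" "w\<in>V" using ends2[OF e(1)] e(3) by auto
  let ?U = "Sc E ends c u \<union> Sc E ends c w"
  have fin: "finite ?U" using Sc_sub finite_subset by (metis finite_UnI finite_atLeastAtMost)
  have "poor_edge E ends c e \<or> rich_edge E ends c e" using e(1,2) unfolding abnormal_edges_def by auto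
  then show ?thesis
  proof
    assume "poor_edge E ends c e"
    hence c3: "card ?U = 3" unfolding poor_edge_def using ec[OF e(3)] by simp
    have "Sc E ends c u = ?U" by (rule card_subset_eq[OF fin]) (auto simp: c3 Sc_card uw)
    moreover have "Sc E ends c w = ?U" by (rule card_subset_eq[OF fin]) (auto simp: c3 Sc_card uw)
    ultimately show ?thesis unfolding M_def by simp
  next
    assume "rich_edge E ends c e"
    hence c5: "card ?U = 5" unfolding rich_edge_def using ec[OF e(3)] by simp
    have Usub: "?U \<subseteq> {1..5}" using Sc_sub[of u] Sc_sub[of w] by blast
    have U: "?U = {1..5}"
      using card_subset_eq[OF finite_atLeastAtMost Usub] c5 by simp
    have ceu: "c e \<notin> M u" "c e \<notin> M w" using col_notM e by auto
    have sub: "M w \<subseteq> ({1..5} - {c e}) - M u"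
    proof
      fix z assume z: "z \<in> M w"
      hence "z \<in> {1..5}" "z \<notin> Sc E ends c w" unfolding M_def by auto
      moreover have "z \<noteq> c e" using z ceu by auto
      moreover have "z \<notin> M u" using U \<open>z \<in> {1..5}\<close> \<open>z \<notin> Sc E ends c w\<close> unfolding M_def by auto
      ultimately show "z \<in> ({1..5} - {c e}) - M u" by auto
    qed
    have Mu: "M u \<subseteq> {1..5} - {c e}" using M_sub ceu by auto
    have "card ({1..5::nat} - {c e}) = 4" using colr[OF e(1)] by simp
    hence "card (({1..5} - {c e}) - M u) = 2" using Mu M_card[OF uw(1)]
      by (simp add: card_Diff_subset finite_subset)
    hence "M w = ({1..5} - {c e}) - M u"
      by (intro card_subset_eq[OF _ sub]) (auto simp: M_card uw)
    thus ?thesis by simp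
  qed
qed

lemma abn_edge:
  assumes e: "e \<in> abnormal_edges E ends c" "ends e = {u,w}" "u\<noteq>w"
  shows "M w \<noteq> M u \<and> M w \<noteq> ({1..5} - {c e}) - M u"
proof -
  have eE: "e\<in>E" and np: "\<not> poor_edge E ends c e" and nr: "\<not> rich_edge E ends c e"
    using e(1) unfolding abnormal_edges_def by auto
  have uw: "u\<in>V" "w\<in>V" using ends2[OF eE] e(2) by auto
  show ?thesis
  proof (intro conjI notI)
    assume "M w = M u"
    hence "Sc E ends c u = Sc E ends c w" by (simp add: Sc_M)
    hence "card (edge_colors E ends c e) = 3" using ec[OF e(2)] Sc_card uw by simp
    thus False using np unfolding poor_edge_def by simp
  next
    assume h: "M w = ({1..5} - {c e}) - M u"
    have "Sc E ends c u \<union> Sc E ends c w = {1..5}"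
      unfolding Sc_M h using M_sub[of u] by auto
    hence "card (edge_colors E ends c e) = 5" using ec[OF e(2)] by simp
    thus False using nr unfolding rich_edge_def by simp
  qed
qed

lemma class_pres:
  assumes "M u \<subseteq> C" "M w \<subseteq> C" "R \<subseteq> C" "M w = M u \<or> M w = C - M u"
  shows "M u \<in> {R, C - R} \<longleftrightarrow> M w \<in> {R, C - R}"
  using assms by (auto simp: double_diff)

lemma count:
  assumes k: "k\<in>{1..5}" and R: "R \<subseteq> {1..5} - {k}"
    and X: "X = {v\<in>V. M v \<in> {R, ({1..5} - {k}) - R}}"
  shows "card X = (\<Sum>e\<in>{e\<in>E. c e = k}. card (ends e \<inter> X))"
proof -
  let ?Ek = "{e\<in>E. c e = k}"
  have finX: "finite X" using finV X by simp
  have finEk: "finite ?Ek" using finE by simp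
  have one: "card {e\<in>?Ek. v\<in>ends e} = 1" if v: "v\<in>X" for v
  proof -
    have vV: "v\<in>V" and kM: "k \<notin> M v" using v X R by auto
    obtain e where e: "e\<in>E" "v\<in>ends e" "c e = k" using ex_edge[OF vV k kM] by auto
    have "{e\<in>?Ek. v\<in>ends e} = {e}" using e uniq by auto
    thus ?thesis by simp
  qed
  have "card X = (\<Sum>v\<in>X. card {e\<in>?Ek. v\<in>ends e})" using one by simp
  also have "\<dots> = (\<Sum>v\<in>X. \<Sum>e\<in>?Ek. if v\<in>ends e then 1 else 0)"
    using finEk by (simp add: sum.inter_filter[symmetric])
  also have "\<dots> = (\<Sum>e\<in>?Ek. \<Sum>v\<in>X. if v\<in>ends e then 1 else 0)"
    by (rule sum.swap)
  also have "\<dots> = (\<Sum>e\<in>?Ek. card {v\<in>X. v\<in>ends e})"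
    using finX by (simp add: sum.inter_filter[symmetric])
  also have "\<dots> = (\<Sum>e\<in>?Ek. card (ends e \<inter> X))"
    by (intro sum.cong) (auto intro: arg_cong[where f=card])
  finally show ?thesis .
qed

lemma parity:
  assumes k: "k\<in>{1..5}" and R: "R \<subseteq> {1..5} - {k}"
    and X: "X = {v\<in>V. M v \<in> {R, ({1..5} - {k}) - R}}"
  shows "even (card X) \<longleftrightarrow>
     even (\<Sum>e\<in>{e\<in>E. c e = k} \<inter> abnormal_edges E ends c. card (ends e \<inter> X))"
proof -
  let ?Ek = "{e\<in>E. c e = k}" and ?A = "abnormal_edges E ends c"
  have finEk: "finite ?Ek" using finE by simp
  have split: "?Ek = (?Ek - ?A) \<union> (?Ek \<inter> ?A)" by auto
  have s: "(\<Sum>e\<in>?Ek. card (ends e \<inter> X)) =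
     (\<Sum>e\<in>?Ek - ?A. card (ends e \<inter> X)) + (\<Sum>e\<in>?Ek \<inter> ?A. card (ends e \<inter> X))"
    using finEk by (subst split, subst sum.union_disjoint) auto
  have ev: "even (\<Sum>e\<in>?Ek - ?A. card (ends e \<inter> X))"
  proof (rule dvd_sum)
    fix e assume e: "e \<in> ?Ek - ?A"
    hence eE: "e\<in>E" and ce: "c e = k" and na: "e \<notin> ?A" by auto
    obtain u w where uw: "u\<noteq>w" "ends e = {u,w}" using ends_eq[OF eE] by auto
    have uwV: "u\<in>V" "w\<in>V" using ends2[OF eE] uw by auto
    have h1: "M w = M u \<or> M w = ({1..5} - {k}) - M u" using normal_edge[OF eE na uw(2,1)] ce by simp
    have h2: "M u \<subseteq> {1..5} - {k}" "M w \<subseteq> {1..5} - {k}"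
      using col_notM[OF eE] uw ce M_sub by auto
    have "M u \<in> {R, ({1..5} - {k}) - R} \<longleftrightarrow> M w \<in> {R, ({1..5} - {k}) - R}"
      by (rule class_pres[OF h2 R h1])
    hence "u \<in> X \<longleftrightarrow> w \<in> X" unfolding X using uwV by simp
    hence "ends e \<inter> X = {} \<or> ends e \<inter> X = {u,w}" using uw by auto
    thus "2 dvd card (ends e \<inter> X)" using uw by auto
  qed
  show ?thesis using count[OF k R X] s ev by simp
qed

lemma cardX:
  assumes k: "k\<in>{1..5}" and R: "R \<subseteq> {1..5} - {k}" and cR: "card R = 2"
  shows "card {v\<in>V. M v \<in> {R, ({1..5} - {k}) - R}} = n R + n (({1..5} - {k}) - R)"
proof -
  have ne: "R \<noteq> ({1..5} - {k}) - R"
  proof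
    assume h: "R = ({1..5} - {k}) - R"
    have "x \<notin> R" for x
    proof
      assume xR: "x \<in> R"
      have "x \<in> ({1..5} - {k}) - R" by (subst h[symmetric]) (rule xR)
      thus False using xR by simp
    qed
    hence "R = {}" by blast
    thus False using cR by simp
  qed
  have "{v\<in>V. M v \<in> {R, ({1..5} - {k}) - R}} = {v\<in>V. M v = R} \<union> {v\<in>V. M v = ({1..5} - {k}) - R}"
    by blast
  moreover have "{v\<in>V. M v = R} \<inter> {v\<in>V. M v = ({1..5} - {k}) - R} = {}"
    using ne by blast
  hence "card ({v\<in>V. M v = R} \<union> {v\<in>V. M v = ({1..5} - {k}) - R}) = n R + n (({1..5} - {k}) - R)"
    unfolding n_def using finV by (intro card_Un_disjoint) auto
  ultimately show ?thesis by simp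
qed

theorem main: "card (abnormal_edges E ends c) \<noteq> 1"
proof
  assume "card (abnormal_edges E ends c) = 1"
  then obtain e0 where A: "abnormal_edges E ends c = {e0}" by (auto simp: card_1_singleton_iff)
  hence e0: "e0 \<in> E" unfolding abnormal_edges_def by auto
  define a where "a = c e0"
  have a: "a \<in> {1..5}" using colr e0 a_def by simp
  have pe: "even (n R + n (({1..5} - {k}) - R))"
    if k: "k\<in>{1..5}" "k \<noteq> a" and R: "R \<subseteq> {1..5} - {k}" "card R = 2" for k R
  proof -
    have "{e\<in>E. c e = k} \<inter> abnormal_edges E ends c = {}" using A k a_def by auto
    thus ?thesis using parity[OF k(1) R(1) refl] cardX[OF k(1) R] by simp
  qed
  obtain x y where xy: "x\<noteq>y" "ends e0 = {x,y}" using ends_eq[OF e0] by auto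
  have xV: "x\<in>V" "y\<in>V" using ends2[OF e0] xy by auto
  have Mx: "M x \<subseteq> {1..5} - {a}" using col_notM[OF e0] xy M_sub a_def by auto
  have po: "odd (n (M x) + n (({1..5} - {a}) - M x))"
  proof -
    let ?X = "{v\<in>V. M v \<in> {M x, ({1..5} - {a}) - M x}}"
    have ab: "M y \<noteq> M x \<and> M y \<noteq> ({1..5} - {a}) - M x"
      using abn_edge[of e0 x y] A xy a_def by auto
    have "ends e0 \<inter> ?X = {x}" using xy xV ab by auto
    moreover have "{e\<in>E. c e = a} \<inter> abnormal_edges E ends c = {e0}" using A e0 a_def by auto
    ultimately have "odd (card ?X)" using parity[OF a Mx refl] by simp
    thus ?thesis using cardX[OF a Mx M_card[OF xV(1)]] by simp
  qed
  obtain i j where ij: "i\<noteq>j" "M x = {i,j}" using M_card[OF xV(1)] by (meson card_2_iff)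
  have c4: "card ({1..5::nat} - {a}) = 4" using a by simp
  have "card (({1..5} - {a}) - M x) = 2" using c4 Mx M_card[OF xV(1)]
    by (simp add: card_Diff_subset finite_subset)
  then obtain l m where lm: "l\<noteq>m" "({1..5} - {a}) - M x = {l,m}" by (meson card_2_iff)
  have ijs: "i \<in> {1..5}" "j\<in>{1..5}" "i\<noteq>a" "j\<noteq>a" using Mx ij by auto
  have lms: "l\<noteq>m" "l \<in> {1..5}" "m\<in>{1..5}" "l\<noteq>a" "m\<noteq>a" "l\<noteq>i" "l\<noteq>j" "m\<noteq>i" "m\<noteq>j"
  proof -
    have "l \<in> ({1..5} - {a}) - M x" "m \<in> ({1..5} - {a}) - M x" using lm by auto
    thus "l\<noteq>m" "l \<in> {1..5}" "m\<in>{1..5}" "l\<noteq>a" "m\<noteq>a" "l\<noteq>i" "l\<noteq>j" "m\<noteq>i" "m\<noteq>j"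
      using ij lm(1) by auto
  qed
  have lm': "(({1..5::nat} - {a}) - {i,j}) = {l,m}" using lm ij by simp
  have U: "{1..5::nat} = {a,i,j,l,m}"
    using lm' ijs(1,2) lms(2,3) a by blast
  have e1: "even (n {i,j} + n {a,m})"
  proof -
    have eq: "({1..5} - {l}) - {i,j} = {a,m}" unfolding U using ijs lms ij a by auto
    have s: "{i,j} \<subseteq> {1..5} - {l}" using ijs lms ij a by auto
    have cc: "card {i,j} = 2" using ijs lms ij a by auto
    show ?thesis using pe[OF _ _ s cc] eq lms ijs by simp
  qed
  have e2: "even (n {a,m} + n {j,l})"
  proof -
    have eq: "({1..5} - {i}) - {a,m} = {j,l}" unfolding U using ijs lms ij a by auto
    have s: "{a,m} \<subseteq> {1..5} - {i}" using ijs lms ij a by auto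
    have cc: "card {a,m} = 2" using ijs lms ij a by auto
    show ?thesis using pe[OF _ _ s cc] eq lms ijs by simp
  qed
  have e3: "even (n {j,l} + n {a,i})"
  proof -
    have eq: "({1..5} - {m}) - {j,l} = {a,i}" unfolding U using ijs lms ij a by auto
    have s: "{j,l} \<subseteq> {1..5} - {m}" using ijs lms ij a by auto
    have cc: "card {j,l} = 2" using ijs lms ij a by auto
    show ?thesis using pe[OF _ _ s cc] eq lms ijs by simp
  qed
  have e4: "even (n {a,i} + n {l,m})"
  proof -
    have eq: "({1..5} - {j}) - {a,i} = {l,m}" unfolding U using ijs lms ij a by auto
    have s: "{a,i} \<subseteq> {1..5} - {j}" using ijs lms ij a by auto
    have cc: "card {a,i} = 2" using ijs lms ij a by auto
    show ?thesis using pe[OF _ _ s cc] eq lms ijs by simp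
  qed
  have o: "odd (n {i,j} + n {l,m})" using po ij lm by simp
  show False using e1 e2 e3 e4 o by presburger
qed

end

theorem mainTheorem6:
  fixes V :: "'v set" and E :: "'e set" and ends :: "'e \<Rightarrow> 'v set" and c :: "'e \<Rightarrow> nat"
  assumes "cubic V E ends"
    and "proper_5_edge_coloring E ends c"
  shows "card (abnormal_edges E ends c) \<noteq> 1"
proof -
  interpret G5 V E ends c using assms by unfold_locales
  show ?thesis by (rule main)
qed

end
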